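(* Fix $u_{\max}>0$, $u^*\in[0,u_{\max}]$, $u_a\in[0,u_{\max}]$, $C\ge0$, and consider the problem (P2): $\min_{z\in\mathcal C_b}\{z^2: q(z)\le -C\}$ where $q(z)=g(u_a,z)$. Then $q'(z)=\frac1{\hat u}(z-u^* )(z-\hat u)$. Let $m=\frac{2u^*+u_{\max}}4$ and $\gamma=\max\{u^*,\hat u\}$. (i) If $u^*\ne\hat u$: if $-C\ge q(m)$, the optimal solution of (P2) is $z=m$; if $q(\gamma)\le -C<q(m)$, the optimal solution is the smallest root of $q(z)=-C$ in $(m,u_{\max}]$; if $-C<q(\gamma)$, (P2) is infeasible. (ii) If $u^*=\hat u$: if $-C\ge q(m)$, the optimal solution is $z=m$; if $-C<q(m)$, (P2) is infeasible.
   Context: $f(u)=u(1-u/u_{\max})$ on $[0,u_{\max}]$, $\hat u=u_{\max}/2$ its unique maximizer, $F$ a primitive of $f$, $g(s,z)=(s-u^* )f(s)-(z-u^* )f(z)-F(s)+F(z)$, and $\mathcal C_b=[\frac{2u^*+u_{\max}}4,u_{\max}]$. *)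

theory Defs
  imports "HOL-Analysis.Analysis"
begin

definition flux :: "real \<Rightarrow> real \<Rightarrow> real" where
  "flux umax u = u * (1 - u / umax)"

definition gfun :: "real \<Rightarrow> (real \<Rightarrow> real) \<Rightarrow> real \<Rightarrow> real \<Rightarrow> real \<Rightarrow> real" where
  "gfun umax F ustar s z = (s - ustar) * flux umax s - (z - ustar) * flux umax z - F s + F z"

definition Cb :: "real \<Rightarrow> real \<Rightarrow> real set" where
  "Cb umax ustar = {(2 * ustar + umax) / 4 .. umax}"

definition P2_feasible :: "real \<Rightarrow> (real \<Rightarrow> real) \<Rightarrow> real \<Rightarrow> real \<Rightarrow> real \<Rightarrow> real set" where
  "P2_feasible umax F ustar ua C = {z \<in> Cb umax ustar. gfun umax F ustar ua z \<le> - C}"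

definition P2_optimal :: "real \<Rightarrow> (real \<Rightarrow> real) \<Rightarrow> real \<Rightarrow> real \<Rightarrow> real \<Rightarrow> real \<Rightarrow> bool" where
  "P2_optimal umax F ustar ua C z \<longleftrightarrow>
     z \<in> P2_feasible umax F ustar ua C \<and>
     (\<forall>y \<in> P2_feasible umax F ustar ua C. z\<^sup>2 \<le> y\<^sup>2)"

end

theory Submission
  imports Defs
begin

theorem mainTheorem5:
  fixes umax ustar ua C :: real and F :: "real \<Rightarrow> real"
  assumes umax_pos: "umax > 0"
    and ustar: "ustar \<in> {0..umax}"
    and ua: "ua \<in> {0..umax}"
    and C: "C \<ge> 0"
    and F_prim: "\<And>u. (F has_real_derivative flux umax u) (at u)"
  defines "q \<equiv> (\<lambda>z. gfun umax F ustar ua z)"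
    and "uhat \<equiv> umax / 2"
    and "m \<equiv> (2 * ustar + umax) / 4"
    and "\<gamma> \<equiv> max ustar (umax / 2)"
  shows
    "(\<forall>z. (q has_real_derivative (1 / uhat) * (z - ustar) * (z - uhat)) (at z))
     \<and> (ustar \<noteq> uhat \<longrightarrow>
          (- C \<ge> q m \<longrightarrow> {z. P2_optimal umax F ustar ua C z} = {m})
        \<and> (q \<gamma> \<le> - C \<and> - C < q m \<longrightarrow>
             (\<exists>r. r \<in> {m<..umax} \<and> q r = - C
                  \<and> (\<forall>z \<in> {m<..umax}. q z = - C \<longrightarrow> r \<le> z)
                  \<and> {z. P2_optimal umax F ustar ua C z} = {r}))
        \<and> (- C < q \<gamma> \<longrightarrow> P2_feasible umax F ustar ua C = {}))
     \<and> (ustar = uhat \<longrightarrow>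
          (- C \<ge> q m \<longrightarrow> {z. P2_optimal umax F ustar ua C z} = {m})
        \<and> (- C < q m \<longrightarrow> P2_feasible umax F ustar ua C = {}))"
proof -
  let ?d = "\<lambda>z. (1 / uhat) * (z - ustar) * (z - uhat)"
  have D: "\<And>z. (q has_real_derivative ?d z) (at z)"
  proof -
    fix z
    have "((\<lambda>z. (ua - ustar) * flux umax ua - (z - ustar) * (z * (1 - z / umax)) - F ua + F z)
          has_real_derivative ?d z) (at z)" (is "(?g has_real_derivative _) _")
      using umax_pos
      by (auto intro!: derivative_eq_intros F_prim simp: flux_def uhat_def field_simps)
    moreover have "?g = q" unfolding q_def gfun_def flux_def by (rule ext) simp
    ultimately show "(q has_real_derivative ?d z) (at z)" by simp
  qed
  have uh: "uhat > 0" using umax_pos by (simp add: uhat_def)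
  have cont: "\<forall>z. isCont q z" using D DERIV_isCont by blast
  have mpos: "m > 0" using ustar umax_pos by (simp add: m_def)
  have mg: "m \<le> \<gamma>" unfolding m_def \<gamma>_def by auto
  have gu: "\<gamma> \<le> umax" using ustar umax_pos unfolding \<gamma>_def by auto
  have decr: "q y < q x" if ne: "ustar \<noteq> uhat" and h: "m \<le> x" "x < y" "y \<le> \<gamma>" for x y
  proof -
    obtain z where z: "x < z" "z < y" "q y - q x = (y - x) * ?d z"
      using MVT2[OF \<open>x < y\<close>, of q ?d] D by blast
    have "m < z" "z < \<gamma>" using z h by auto
    hence "(z - ustar) * (z - uhat) < 0" using ne unfolding m_def \<gamma>_def uhat_def
      by (cases "ustar < umax / 2") (auto simp: mult_pos_neg mult_neg_pos)
    hence "?d z < 0" using uh by (simp add: divide_neg_pos)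
    hence "(y - x) * ?d z < 0" by (rule mult_pos_neg[rotated]) (use z in simp)
    thus ?thesis using z(3) by linarith
  qed
  have incr: "q x < q y" if h: "\<gamma> \<le> x" "x < y" for x y
  proof -
    obtain z where z: "x < z" "z < y" "q y - q x = (y - x) * ?d z"
      using MVT2[OF \<open>x < y\<close>, of q ?d] D by blast
    have "z > ustar" "z > uhat" using z h unfolding \<gamma>_def uhat_def by auto
    hence "?d z > 0" using uh by simp
    hence "(y - x) * ?d z > 0" by (rule mult_pos_pos[rotated]) (use z in simp)
    thus ?thesis using z(3) by linarith
  qed
  have qmin: "q \<gamma> \<le> q z" if "m \<le> z" for z
  proof (cases "z \<le> \<gamma>")
    case True
    show ?thesis
    proof (cases "ustar = uhat")
      case True
      hence "m = \<gamma>" unfolding m_def \<gamma>_def uhat_def by simp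
      thus ?thesis using \<open>z \<le> \<gamma>\<close> \<open>m \<le> z\<close> by simp
    next
      case False
      thus ?thesis using decr[OF False \<open>m \<le> z\<close> _ order.refl] True by fastforce
    qed
  next
    case False thus ?thesis using incr[of \<gamma> z] by simp
  qed
  have feas: "z \<in> P2_feasible umax F ustar ua C \<longleftrightarrow> m \<le> z \<and> z \<le> umax \<and> q z \<le> - C" for z
    unfolding P2_feasible_def Cb_def q_def m_def by auto
  have opt: "{z. P2_optimal umax F ustar ua C z} = {z0}"
    if z0: "z0 \<in> P2_feasible umax F ustar ua C" and le: "\<forall>y\<in>P2_feasible umax F ustar ua C. z0 \<le> y" for z0
  proof -
    have z0p: "z0 > 0" using z0 feas mpos by force
    have "P2_optimal umax F ustar ua C z \<longleftrightarrow> z = z0" for z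
    proof
      assume "P2_optimal umax F ustar ua C z"
      hence zf: "z \<in> P2_feasible umax F ustar ua C" and "z\<^sup>2 \<le> z0\<^sup>2"
        using z0 unfolding P2_optimal_def by auto
      moreover have "z > 0" using zf feas mpos by force
      ultimately have "z \<le> z0" using z0p by (meson power2_le_imp_le less_imp_le)
      thus "z = z0" using le zf by force
    next
      assume "z = z0"
      thus "P2_optimal umax F ustar ua C z" unfolding P2_optimal_def using z0 le z0p
        by (auto intro!: power_mono)
    qed
    thus ?thesis by auto
  qed
  have caseA: "{z. P2_optimal umax F ustar ua C z} = {m}" if "- C \<ge> q m"
    by (rule opt) (use that feas mg gu in auto)
  have infeas: "P2_feasible umax F ustar ua C = {}" if "- C < q \<gamma>"
    using that feas qmin by force
  show ?thesis
  proof (intro conjI impI)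
    show "\<forall>z. (q has_real_derivative ?d z) (at z)" using D by blast
  next
    assume "- C \<ge> q m" thus "{z. P2_optimal umax F ustar ua C z} = {m}" by (rule caseA)
  next
    assume "- C < q \<gamma>" thus "P2_feasible umax F ustar ua C = {}" by (rule infeas)
  next
    assume "- C \<ge> q m" thus "{z. P2_optimal umax F ustar ua C z} = {m}" by (rule caseA)
  next
    assume "ustar = uhat" "- C < q m"
    hence "m = \<gamma>" unfolding m_def \<gamma>_def uhat_def by simp
    thus "P2_feasible umax F ustar ua C = {}" using infeas \<open>- C < q m\<close> by simp
  next
    assume ne: "ustar \<noteq> uhat" and h: "q \<gamma> \<le> - C \<and> - C < q m"
    obtain r where r: "m \<le> r" "r \<le> \<gamma>" "q r = - C"
      using IVT2[of q \<gamma> "- C" m] h mg cont by auto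
    have rm: "m < r" using r h by (metis order_le_imp_less_or_eq less_irrefl)
    have below: "q z > - C" if "m \<le> z" "z < r" for z
      using decr[OF ne \<open>m \<le> z\<close> \<open>z < r\<close> \<open>r \<le> \<gamma>\<close>] r by simp
    have rmin: "r \<le> z" if "m \<le> z" "q z \<le> - C" for z
      using below that by force
    show "\<exists>r. r \<in> {m<..umax} \<and> q r = - C
                  \<and> (\<forall>z \<in> {m<..umax}. q z = - C \<longrightarrow> r \<le> z)
                  \<and> {z. P2_optimal umax F ustar ua C z} = {r}"
    proof (intro exI conjI)
      show "r \<in> {m<..umax}" using rm r gu by auto
      show "q r = - C" by (rule r)
      show "\<forall>z \<in> {m<..umax}. q z = - C \<longrightarrow> r \<le> z" using rmin by auto
      show "{z. P2_optimal umax F ustar ua C z} = {r}"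
        by (rule opt) (use feas rm r gu rmin in auto)
    qed
  qed
qed

end
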